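(* Let $\alpha\in(0,2)$, $(\alpha_n)\subset(0,2)$ with $\alpha_n\to\alpha$, $w$ a probability density on $[0,1]$ continuous on $[0,1)$, and $\{\tau_n\}$ a $w$-pre-chaotic sequence. Let $\tilde z\sim\tau_n$ and $x=(x_1,\dots,x_n)=T_n(\tilde z)$ (so $x_1<\dots<x_n$), set $x_0=0$, and define the random function $\psi_n:[0,1]\to[0,\infty)$ by $\psi_n(\xi)=x_{k-1}$ for $\frac{k-1}{n}\le\xi<\frac kn$, $1\le k\le n$. Let $\rho_n$ be the push-forward of Lebesgue measure on $[0,1]$ under $\psi_n$ and $\mu_n=\frac1n\sum_j\delta_{x_j}$. Then $$\lim_{n\to\infty}\frac1n\mathbb{E}[x_n]=0,$$ and for all $\delta>0$, $\lim_{n\to\infty}\mathbb{P}\{W_1(\mu_n,\rho_n)>\delta\}=0$.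
   Context: $S_1^{(n)}=\{\tilde z\in[0,\infty)^n:\sum_j\tilde z_j=1\}$. $\{\tau_n\}$ (probability measures on $S_1^{(n)}$) is $w$-pre-chaotic if, writing $n\mathbb{E}_{\tau_n}[\tilde z_j]=w(j/n)+r_n(j)$, for each $0<\xi_*<1$ there is $C$ depending only on $\xi_*$ such that for each $\epsilon>0$ there is $n_\epsilon$ with, for all $n>n_\epsilon$ and $j,k<n\xi_*$: $|r_n(j)|<\epsilon$, $\mathrm{Var}[\tilde z_j]\le C\epsilon/n$, $|\mathrm{Cov}(\tilde z_j,\tilde z_k)|\le C\epsilon/n^2$. $T_n(\tilde z)_j=n(1-\frac{\alpha_n}2)\sum_{i=1}^j\frac{\tilde z_i}{n+1-i}+\frac{j-1}{n-1}\alpha_n$. $W_1$ is the Kantorovich–Rubinstein distance $\sup\{|\int\chi d\mu-\int\chi d\nu|:\chi\ 1\text{-Lipschitz}\}$. *)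

theory Defs
  imports "HOL-Probability.Probability"
begin

definition simplex1 :: "nat \<Rightarrow> (nat \<Rightarrow> real) set" where
  "simplex1 n = {z. (\<forall>j\<in>{1..n}. 0 \<le> z j) \<and> (\<Sum>j=1..n. z j) = 1}"

definition expect :: "'a measure \<Rightarrow> ('a \<Rightarrow> real) \<Rightarrow> real" where
  "expect M X = integral\<^sup>L M X"

definition covar :: "'a measure \<Rightarrow> ('a \<Rightarrow> real) \<Rightarrow> ('a \<Rightarrow> real) \<Rightarrow> real" where
  "covar M X Y = integral\<^sup>L M (\<lambda>z. (X z - expect M X) * (Y z - expect M Y))"

definition var :: "'a measure \<Rightarrow> ('a \<Rightarrow> real) \<Rightarrow> real" where
  "var M X = integral\<^sup>L M (\<lambda>z. (X z - expect M X)\<^sup>2)"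

definition pre_chaotic :: "(real \<Rightarrow> real) \<Rightarrow> (nat \<Rightarrow> (nat \<Rightarrow> real) measure) \<Rightarrow> bool" where
  "pre_chaotic w \<tau> \<longleftrightarrow>
     (\<forall>\<xi>. 0 < \<xi> \<and> \<xi> < 1 \<longrightarrow>
       (\<exists>C::real. \<forall>\<epsilon>>0. \<exists>N. \<forall>n>N. \<forall>j k.
          1 \<le> j \<longrightarrow> 1 \<le> k \<longrightarrow> real j < real n * \<xi> \<longrightarrow> real k < real n * \<xi> \<longrightarrow>
          \<bar>real n * expect (\<tau> n) (\<lambda>z. z j) - w (real j / real n)\<bar> < \<epsilon> \<and>
          var (\<tau> n) (\<lambda>z. z j) \<le> C * \<epsilon> / real n \<and>
          (j \<noteq> k \<longrightarrow> \<bar>covar (\<tau> n) (\<lambda>z. z j) (\<lambda>z. z k)\<bar> \<le> C * \<epsilon> / (real n)\<^sup>2)))"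

definition Tmap :: "nat \<Rightarrow> real \<Rightarrow> (nat \<Rightarrow> real) \<Rightarrow> nat \<Rightarrow> real" where
  "Tmap n a z j = real n * (1 - a / 2) * (\<Sum>i=1..j. z i / (real n + 1 - real i))
                  + (real j - 1) / (real n - 1) * a"

definition xpt :: "nat \<Rightarrow> real \<Rightarrow> (nat \<Rightarrow> real) \<Rightarrow> nat \<Rightarrow> real" where
  "xpt n a z j = (if j = 0 then 0 else Tmap n a z j)"

text \<open>psi_n(xi) = x_{k-1} for (k-1)/n \<le> xi < k/n (value at xi = 1 irrelevant, null set).\<close>
definition psi :: "nat \<Rightarrow> real \<Rightarrow> (nat \<Rightarrow> real) \<Rightarrow> real \<Rightarrow> real" where
  "psi n a z \<xi> = xpt n a z (nat \<lfloor>real n * \<xi>\<rfloor>)"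

definition rho :: "nat \<Rightarrow> real \<Rightarrow> (nat \<Rightarrow> real) \<Rightarrow> real measure" where
  "rho n a z = distr (restrict_space lborel {0..1}) borel (psi n a z)"

definition mu_emp :: "nat \<Rightarrow> real \<Rightarrow> (nat \<Rightarrow> real) \<Rightarrow> real measure" where
  "mu_emp n a z = measure_pmf (map_pmf (xpt n a z) (pmf_of_set {1..n}))"

text \<open>Kantorovich--Rubinstein distance\<close>
definition W1 :: "real measure \<Rightarrow> real measure \<Rightarrow> ereal" where
  "W1 M N = (SUP g\<in>{g::real\<Rightarrow>real. lipschitz_on 1 UNIV g}.
               ereal \<bar>integral\<^sup>L M g - integral\<^sup>L N g\<bar>)"

end

theory Submission
  imports Defs
begin

lemma floor_iff_interval:
  assumes "0 < n" "0 \<le> x"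
  shows "(x \<in> {real k / real n ..< (real k + 1) / real n}) = (nat \<lfloor>real n * x\<rfloor> = k)"
proof -
  have "(x \<in> {real k / real n ..< (real k + 1) / real n}) = (real k \<le> real n * x \<and> real n * x < real k + 1)"
    using assms by (auto simp: field_simps)
  also have "\<dots> = (\<lfloor>real n * x\<rfloor> = int k)" by (simp add: floor_eq_iff)
  also have "\<dots> = (nat \<lfloor>real n * x\<rfloor> = k)" using assms by auto
  finally show ?thesis .
qed

lemma psi_pointwise:
  fixes g :: "real \<Rightarrow> real"
  assumes n: "0 < n"
  shows "indicator {0..1} x * g (psi n a z x) =
     (\<Sum>k<n. g (xpt n a z k) * indicator {real k / real n ..< (real k + 1) / real n} x)
     + g (xpt n a z n) * indicator {1} x"
proof (cases "0 \<le> x \<and> x < 1")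
  case True
  define k where "k = nat \<lfloor>real n * x\<rfloor>"
  have "real n * x < real n" using True n by simp
  then have "\<lfloor>real n * x\<rfloor> < int n" by (simp add: floor_less_iff)
  then have kn: "k < n" unfolding k_def using True by (simp add: nat_less_iff)
  have "(\<Sum>k'<n. g (xpt n a z k') * indicator {real k' / real n ..< (real k' + 1) / real n} x)
      = (\<Sum>k'<n. if k' = k then g (xpt n a z k) else 0)"
    by (rule sum.cong) (use floor_iff_interval[OF n] True in \<open>auto simp: k_def indicator_def\<close>)
  also have "\<dots> = g (xpt n a z k)" using kn by simp
  finally show ?thesis using True by (simp add: psi_def k_def indicator_def)
next
  case False
  have z: "indicator {real k / real n ..< (real k + 1) / real n} x = (0::real)" if "k < n" for k
  proof -
    have "(real k + 1) / real n \<le> 1" using that n by (simp add: field_simps)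
    moreover have "0 \<le> real k / real n" by simp
    ultimately have "x \<notin> {real k / real n ..< (real k + 1) / real n}" using False by (smt (verit) atLeastLessThan_iff)
    then show ?thesis by simp
  qed
  show ?thesis
  proof (cases "x = 1")
    case True
    then show ?thesis using z by (simp add: psi_def xpt_def)
  next
    case False2: False
    have "indicator {0..1} x = (0::real)" "indicator {1} x = (0::real)" using False False2 by auto
    then show ?thesis using z by simp
  qed
qed

lemma int_step:
  assumes n: "0 < n"
  shows "integral\<^sup>L lborel (\<lambda>x. c * indicator {real k / real n ..< (real k + 1) / real n} x) = c * (1 / real n)"
proof -
  have "real k / real n \<le> (real k + 1)/real n" by (simp add: divide_right_mono)
  then have "measure lborel {real k / real n ..< (real k + 1) / real n} = 1 / real n"
    by (simp add: measure_lborel_Ico diff_divide_distrib[symmetric])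
  then show ?thesis by simp
qed

lemma integral_rho:
  fixes g :: "real \<Rightarrow> real"
  assumes n: "0 < n" and g: "g \<in> borel_measurable borel"
  shows "integral\<^sup>L (rho n a z) g = (\<Sum>k<n. g (xpt n a z k)) / real n"
proof -
  have pm: "psi n a z \<in> borel_measurable (restrict_space lborel {0..1})"
    by (rule measurable_restrict_space1) (unfold psi_def, measurable)
  have "integral\<^sup>L (rho n a z) g = integral\<^sup>L (restrict_space lborel {0..1}) (\<lambda>x. g (psi n a z x))"
    unfolding rho_def by (rule integral_distr[OF pm g])
  also have "\<dots> = integral\<^sup>L lborel (\<lambda>x. indicator {0..1} x *\<^sub>R g (psi n a z x))"
    by (rule integral_restrict_space) auto
  also have "\<dots> = integral\<^sup>L lborel (\<lambda>x. (\<Sum>k<n. g (xpt n a z k) * indicator {real k / real n ..< (real k + 1) / real n} x)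
     + g (xpt n a z n) * indicator {1} x)"
    by (simp only: real_scaleR_def psi_pointwise[OF n])
  also have "\<dots> = (\<Sum>k<n. g (xpt n a z k) * (1 / real n))"
  proof -
    have i1: "integrable lborel (\<lambda>x. g (xpt n a z k) * indicat_real {real k / real n ..< (real k + 1) / real n} x)" for k
    proof -
      have "real k / real n \<le> (real k + 1)/real n" by (simp add: divide_right_mono)
      then show ?thesis by (intro integrable_mult_right integrable_real_indicator) (auto simp: emeasure_lborel_Ico)
    qed
    have i2: "integrable lborel (\<lambda>x. g (xpt n a z n) * indicat_real {1} x)"
      by (intro integrable_mult_right integrable_real_indicator) auto
    show ?thesis
      apply (subst Bochner_Integration.integral_add[OF Bochner_Integration.integrable_sum[OF i1] i2])
      apply (subst Bochner_Integration.integral_sum[OF i1])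
      apply (simp only: int_step[OF n])
      apply simp
      done
  qed
  also have "\<dots> = (\<Sum>k<n. g (xpt n a z k)) / real n"
    by (simp add: sum_divide_distrib)
  finally show ?thesis .
qed

lemma W1_bound:
  assumes n: "0 < n"
  shows "W1 (mu_emp n a z) (rho n a z) \<le> ereal (\<bar>xpt n a z n\<bar> / real n)"
  unfolding W1_def
proof (rule SUP_least)
  fix g :: "real \<Rightarrow> real" assume "g \<in> {g. lipschitz_on 1 UNIV g}"
  then have L: "lipschitz_on 1 UNIV g" by simp
  then have "continuous_on UNIV g" by (rule lipschitz_on_continuous_on)
  then have gm: "g \<in> borel_measurable borel" by (rule borel_measurable_continuous_onI)
  have I1: "integral\<^sup>L (mu_emp n a z) g = (\<Sum>j=1..n. g (xpt n a z j)) / real n"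
    unfolding mu_emp_def using n by (simp add: integral_pmf_of_set)
  have I2: "integral\<^sup>L (rho n a z) g = (\<Sum>k<n. g (xpt n a z k)) / real n"
    by (rule integral_rho[OF n gm])
  have "(\<Sum>j=1..n. g (xpt n a z j)) = (\<Sum>k<n. g (xpt n a z (Suc k)))"
    by (simp add: sum.atLeast1_atMost_eq)
  then have "(\<Sum>j=1..n. g (xpt n a z j)) - (\<Sum>k<n. g (xpt n a z k)) = g (xpt n a z n) - g (xpt n a z 0)"
    using sum_lessThan_telescope[of "\<lambda>k. g (xpt n a z k)" n] by (simp add: sum_subtractf)
  then have D: "integral\<^sup>L (mu_emp n a z) g - integral\<^sup>L (rho n a z) g = (g (xpt n a z n) - g 0) / real n"
    unfolding I1 I2 by (simp add: diff_divide_distrib[symmetric] xpt_def)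
  have "dist (g (xpt n a z n)) (g 0) \<le> 1 * dist (xpt n a z n) 0"
    by (rule lipschitz_onD[OF L]) auto
  then have "\<bar>g (xpt n a z n) - g 0\<bar> \<le> \<bar>xpt n a z n\<bar>" by (simp add: dist_real_def)
  then have "\<bar>(g (xpt n a z n) - g 0) / real n\<bar> \<le> \<bar>xpt n a z n\<bar> / real n"
    using n by (simp add: divide_right_mono)
  then show "ereal \<bar>integral\<^sup>L (mu_emp n a z) g - integral\<^sup>L (rho n a z) g\<bar> \<le> ereal (\<bar>xpt n a z n\<bar> / real n)"
    unfolding D by simp
qed

lemma riemann_step:
  fixes w :: "real \<Rightarrow> real"
  assumes wi: "w integrable_on {0..1}" and n: "0 < n"
    and uc: "\<forall>s\<in>{0..\<xi>}. \<forall>t\<in>{0..\<xi>}. dist s t < \<gamma> \<longrightarrow> dist (w s) (w t) < \<eta>"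
    and g: "1 / real n < \<gamma>" and \<xi>: "\<xi> \<le> 1"
  shows "real m / real n \<le> \<xi> \<Longrightarrow> integral {0..real m / real n} w \<le> (\<Sum>j=1..m. w (real j / real n)) / real n + \<eta> * real m / real n"
proof (induction m)
  case 0
  then show ?case by simp
next
  case (Suc m)
  have le1: "real m / real n \<le> real (Suc m) / real n" by (simp add: divide_right_mono)
  then have IH: "integral {0..real m / real n} w \<le> (\<Sum>j=1..m. w (real j / real n)) / real n + \<eta> * real m / real n"
    using Suc by linarith
  have sub: "{0..real (Suc m) / real n} \<subseteq> {0..1}" using Suc \<xi> by auto
  have wi2: "w integrable_on {0..real (Suc m) / real n}"
    by (rule integrable_on_subinterval[OF wi sub])
  have comb: "integral {0..real m / real n} w + integral {real m / real n..real (Suc m) / real n} w = integral {0..real (Suc m) / real n} w"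
    by (rule Henstock_Kurzweil_Integration.integral_combine[OF _ le1 wi2]) simp
  have wi3: "w integrable_on {real m / real n..real (Suc m) / real n}"
    by (rule integrable_on_subinterval[OF wi2]) (use le1 in auto)
  have pt: "w t \<le> w (real (Suc m) / real n) + \<eta>" if t: "t \<in> {real m / real n..real (Suc m) / real n}" for t
  proof -
    have "dist t (real (Suc m) / real n) \<le> 1 / real n"
      using t n by (auto simp: dist_real_def field_simps)
    then have "dist t (real (Suc m) / real n) < \<gamma>" using g by linarith
    moreover have "t \<in> {0..\<xi>}"
    proof -
      have "0 \<le> real m / real n" by simp
      then have "0 \<le> t" using t by (meson atLeastAtMost_iff order_trans)
      moreover have "t \<le> \<xi>" using t Suc(2) by (meson atLeastAtMost_iff order_trans)
      ultimately show ?thesis by simp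
    qed
    moreover have "real (Suc m) / real n \<in> {0..\<xi>}" using Suc(2) by auto
    ultimately have "dist (w t) (w (real (Suc m) / real n)) < \<eta>" using uc by blast
    then show ?thesis by (simp add: dist_real_def)
  qed
  have "integral {real m / real n..real (Suc m) / real n} w \<le> integral {real m / real n..real (Suc m) / real n} (\<lambda>_. w (real (Suc m) / real n) + \<eta>)"
    by (rule integral_le[OF wi3]) (use pt in auto)
  also have "\<dots> = (w (real (Suc m) / real n) + \<eta>) / real n"
    using le1 n by (simp add: field_simps)
  finally have st: "integral {real m / real n..real (Suc m) / real n} w \<le> (w (real (Suc m) / real n) + \<eta>) / real n" .
  have "(\<Sum>j=1..Suc m. w (real j / real n)) = (\<Sum>j=1..m. w (real j / real n)) + w (real (Suc m) / real n)"
    by simp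
  then have "(\<Sum>j=1..Suc m. w (real j / real n)) / real n + \<eta> * real (Suc m) / real n
     = ((\<Sum>j=1..m. w (real j / real n)) / real n + \<eta> * real m / real n) + (w (real (Suc m) / real n) + \<eta>) / real n"
    by (simp add: add_divide_distrib ring_distribs)
  then show ?case using IH st comb by linarith
qed

lemma riemann_lower:
  fixes w :: "real \<Rightarrow> real"
  assumes w0: "\<forall>x\<in>{0..1}. 0 \<le> w x" and wi: "(w has_integral 1) {0..1}"
    and wc: "continuous_on {0..<1} w" and \<eta>: "0 < \<eta>"
  obtains \<xi> where "0 < \<xi>" "\<xi> < 1"
    "\<forall>\<^sub>F n in sequentially. 1 - 2 * \<eta> \<le> (\<Sum>j\<in>{j\<in>{1..n}. real j < real n * \<xi>}. w (real j / real n)) / real n"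
proof -
  have wint: "w integrable_on {0..1}" using wi by blast
  have I1: "integral {0..1} w = 1" using wi by (rule integral_unique)
  have cont: "continuous_on {0..1} (\<lambda>t. integral {0..t} w)"
    by (rule indefinite_integral_continuous_1[OF wint])
  then obtain d where d: "d > 0" "\<forall>t\<in>{0..1}. dist t 1 < d \<longrightarrow> dist (integral {0..t} w) (integral {0..1} w) < \<eta>"
    using \<eta> unfolding continuous_on_iff by (metis atLeastAtMost_iff order_refl zero_le_one)
  define \<xi>0 where "\<xi>0 = max (1/2) (1 - d/2)"
  have x0: "0 < \<xi>0" "\<xi>0 < 1" using d by (auto simp: \<xi>0_def)
  have "dist \<xi>0 1 < d" using d by (auto simp: \<xi>0_def dist_real_def)
  then have "dist (integral {0..\<xi>0} w) 1 < \<eta>" using d x0 I1 by auto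
  then have Ix0: "1 - \<eta> < integral {0..\<xi>0} w" by (auto simp: dist_real_def)
  define \<xi> where "\<xi> = (1 + \<xi>0) / 2"
  have x: "0 < \<xi>" "\<xi> < 1" "\<xi>0 < \<xi>" using x0 by (auto simp: \<xi>_def)
  have "continuous_on {0..\<xi>} w" by (rule continuous_on_subset[OF wc]) (use x in auto)
  then have "uniformly_continuous_on {0..\<xi>} w" by (rule compact_uniformly_continuous) simp
  then obtain \<gamma> where \<gamma>: "\<gamma> > 0" "\<forall>s\<in>{0..\<xi>}. \<forall>t\<in>{0..\<xi>}. dist s t < \<gamma> \<longrightarrow> dist (w s) (w t) < \<eta>"
    using \<eta> unfolding uniformly_continuous_on_def by metis
  have ev1: "\<forall>\<^sub>F n in sequentially. 1 / real n < min \<gamma> (\<xi> - \<xi>0)"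
    by (rule order_tendstoD(2)[OF lim_1_over_n]) (use \<gamma> x in auto)
  have ev2: "\<forall>\<^sub>F n in sequentially. (1::nat) \<le> n" by (rule eventually_ge_at_top)
  have "\<forall>\<^sub>F n in sequentially. 1 - 2 * \<eta> \<le> (\<Sum>j\<in>{j\<in>{1..n}. real j < real n * \<xi>}. w (real j / real n)) / real n"
    using ev1 ev2
  proof eventually_elim
    case (elim n)
    then have n: "0 < n" and g: "1 / real n < \<gamma>" and gap: "1 / real n < \<xi> - \<xi>0" by auto
    define c where "c = \<lceil>real n * \<xi>\<rceil>"
    have "0 < real n * \<xi>" using n x by simp
    then have c1: "1 \<le> c" unfolding c_def by (simp add: one_le_ceiling)
    define M where "M = nat (c - 1)"
    have Mi: "int M = c - 1" using c1 by (simp add: M_def)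
    have jiff: "real j < real n * \<xi> \<longleftrightarrow> j \<le> M" for j
    proof -
      have "real j < real n * \<xi> \<longleftrightarrow> int j < c" unfolding c_def by (simp add: less_ceiling_iff)
      also have "\<dots> \<longleftrightarrow> j \<le> M" using Mi by linarith
      finally show ?thesis .
    qed
    have "real M < real n * \<xi>" using jiff by simp
    then have Mxi: "real M / real n \<le> \<xi>" using n by (simp add: divide_le_eq mult.commute)
    have "real n * \<xi> \<le> real_of_int c" unfolding c_def by (rule le_of_int_ceiling)
    then have "real n * \<xi> - 1 \<le> real M" using Mi by (metis of_int_diff of_int_of_nat_eq of_int_1 diff_right_mono)
    moreover have "real n * (\<xi> - \<xi>0) > 1" using gap n by (simp add: field_simps)
    ultimately have "real n * \<xi>0 \<le> real M" by (simp add: algebra_simps)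
    then have x0M: "\<xi>0 \<le> real M / real n" using n by (simp add: le_divide_eq mult.commute)
    have Mn: "M \<le> n"
    proof -
      have "real M < real n" using \<open>real M < real n * \<xi>\<close> x n
        by (smt (verit) mult_less_cancel_left1 of_nat_0_less_iff)
      then show ?thesis by simp
    qed
    have J: "{j\<in>{1..n}. real j < real n * \<xi>} = {1..M}"
    proof (rule set_eqI)
      fix j show "j \<in> {j\<in>{1..n}. real j < real n * \<xi>} \<longleftrightarrow> j \<in> {1..M}"
        using jiff[of j] Mn by auto
    qed
    have R: "integral {0..real M / real n} w \<le> (\<Sum>j=1..M. w (real j / real n)) / real n + \<eta> * real M / real n"
      by (rule riemann_step[OF wint n \<gamma>(2) g]) (use x Mxi in auto)
    have "\<eta> * real M / real n \<le> \<eta>" using Mn n \<eta> by (simp add: divide_le_eq mult_left_le)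
    have M1: "real M / real n \<le> 1" using Mxi x by linarith
    have wi2: "w integrable_on {0..real M / real n}" by (rule integrable_on_subinterval[OF wint]) (use M1 in auto)
    have comb: "integral {0..\<xi>0} w + integral {\<xi>0..real M / real n} w = integral {0..real M / real n} w"
      by (rule Henstock_Kurzweil_Integration.integral_combine[OF _ x0M wi2]) (use x0 in auto)
    have wi3: "w integrable_on {\<xi>0..real M / real n}" by (rule integrable_on_subinterval[OF wi2]) (use x0 in auto)
    have "0 \<le> integral {\<xi>0..real M / real n} w"
      by (rule integral_nonneg[OF wi3]) (use w0 x0 M1 in auto)
    show ?case unfolding J using R comb Ix0 \<open>\<eta> * real M / real n \<le> \<eta>\<close> \<open>0 \<le> integral {\<xi>0..real M / real n} w\<close>
      by linarith
  qed
  then show ?thesis using that x by blast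
qed

definition Yf :: "nat \<Rightarrow> (nat \<Rightarrow> real) \<Rightarrow> real" where
  "Yf n z = (\<Sum>i=1..n. z i / (real n + 1 - real i))"

definition Jset :: "nat \<Rightarrow> real \<Rightarrow> nat set" where
  "Jset n \<xi> = {j\<in>{1..n}. real j < real n * \<xi>}"

lemma simplex_le1:
  assumes "z \<in> simplex1 n" "j \<in> {1..n}"
  shows "0 \<le> z j" "z j \<le> 1"
proof -
  show "0 \<le> z j" using assms by (auto simp: simplex1_def)
  have "z j \<le> (\<Sum>i=1..n. z i)"
    by (rule member_le_sum) (use assms in \<open>auto simp: simplex1_def\<close>)
  then show "z j \<le> 1" using assms by (simp add: simplex1_def)
qed

lemma coord_integrable:
  assumes P: "prob_space M" and S: "sets M = sets (PiM {1..n} (\<lambda>_. borel))"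
    and A: "AE z in M. z \<in> simplex1 n" and j: "j \<in> {1..n}"
  shows "integrable M (\<lambda>z. z j :: real)"
proof -
  interpret prob_space M by fact
  have "(\<lambda>z. z j) \<in> borel_measurable (PiM {1..n} (\<lambda>_. borel :: real measure))"
    by (rule measurable_component_singleton) (use j in auto)
  moreover have "measurable M borel = measurable (PiM {1..n} (\<lambda>_. borel :: real measure)) (borel :: real measure)"
    by (rule measurable_cong_sets[OF S refl])
  ultimately have m: "(\<lambda>z. z j) \<in> borel_measurable M" by simp
  have "AE z in M. norm (z j) \<le> 1"
    using A by eventually_elim (use simplex_le1[OF _ j] in auto)
  then show ?thesis by (rule integrable_const_bound[OF _ m])
qed

lemma Y_nonneg:
  assumes "z \<in> simplex1 n"
  shows "0 \<le> Yf n z"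
  unfolding Yf_def
proof (rule sum_nonneg)
  fix i assume i: "i \<in> {1..n}"
  then have "0 \<le> z i" using simplex_le1[OF assms i] by simp
  moreover have "0 < real n + 1 - real i" using i by auto
  ultimately show "0 \<le> z i / (real n + 1 - real i)" by simp
qed

lemma Y_bound:
  assumes z: "z \<in> simplex1 n" and x: "0 < \<xi>" "\<xi> < 1" and n: "0 < n"
  shows "Yf n z \<le> 1 / (real n * (1 - \<xi>)) + 1 - (\<Sum>j\<in>Jset n \<xi>. z j)"
proof -
  let ?J = "Jset n \<xi>"
  have Jsub: "?J \<subseteq> {1..n}" by (auto simp: Jset_def)
  have z0: "\<And>i. i \<in> {1..n} \<Longrightarrow> 0 \<le> z i" using simplex_le1[OF z] by blast
  have s1: "(\<Sum>i=1..n. z i) = 1" using z by (simp add: simplex1_def)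
  have split: "Yf n z = (\<Sum>i\<in>{1..n} - ?J. z i / (real n + 1 - real i)) + (\<Sum>i\<in>?J. z i / (real n + 1 - real i))"
    unfolding Yf_def by (rule sum.subset_diff[OF Jsub]) simp
  have splitz: "(\<Sum>i=1..n. z i) = (\<Sum>i\<in>{1..n} - ?J. z i) + (\<Sum>i\<in>?J. z i)"
    by (rule sum.subset_diff[OF Jsub]) simp
  have H0: "0 \<le> (\<Sum>i\<in>?J. z i)" by (rule sum_nonneg) (use z0 Jsub in auto)
  have H1: "(\<Sum>i\<in>?J. z i) \<le> 1"
  proof -
    have "0 \<le> (\<Sum>i\<in>{1..n} - ?J. z i)" by (rule sum_nonneg) (use z0 in auto)
    then show ?thesis using splitz s1 by linarith
  qed
  have pos: "0 < real n * (1 - \<xi>)" using n x by simp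
  have a: "(\<Sum>i\<in>?J. z i / (real n + 1 - real i)) \<le> (\<Sum>i\<in>?J. z i / (real n * (1 - \<xi>)))"
  proof (rule sum_mono)
    fix i assume i: "i \<in> ?J"
    then have "real i < real n * \<xi>" "i \<in> {1..n}" by (auto simp: Jset_def)
    then have "real n * (1 - \<xi>) \<le> real n + 1 - real i" by (simp add: algebra_simps)
    then show "z i / (real n + 1 - real i) \<le> z i / (real n * (1 - \<xi>))"
      using pos z0[OF \<open>i \<in> {1..n}\<close>] by (intro divide_left_mono) auto
  qed
  also have "\<dots> = (\<Sum>i\<in>?J. z i) / (real n * (1 - \<xi>))" by (simp add: sum_divide_distrib)
  also have "\<dots> \<le> 1 / (real n * (1 - \<xi>))" using H1 pos by (simp add: divide_right_mono)
  finally have A: "(\<Sum>i\<in>?J. z i / (real n + 1 - real i)) \<le> 1 / (real n * (1 - \<xi>))" .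
  have B: "(\<Sum>i\<in>{1..n} - ?J. z i / (real n + 1 - real i)) \<le> (\<Sum>i\<in>{1..n} - ?J. z i)"
  proof (rule sum_mono)
    fix i assume i: "i \<in> {1..n} - ?J"
    then have "1 \<le> real n + 1 - real i" "0 \<le> z i" using z0 by auto
    then show "z i / (real n + 1 - real i) \<le> z i"
      using divide_left_mono[of 1 "real n + 1 - real i" "z i"] by simp
  qed
  show ?thesis using split splitz s1 A B by linarith
qed

lemma EY_bound:
  assumes P: "prob_space M" and S: "sets M = sets (PiM {1..n} (\<lambda>_. borel))"
    and A: "AE z in M. z \<in> simplex1 n" and x: "0 < \<xi>" "\<xi> < 1" and n: "0 < n"
  shows "integrable M (Yf n)" "0 \<le> expect M (Yf n)"
    "expect M (Yf n) \<le> 1 / (real n * (1 - \<xi>)) + 1 - (\<Sum>j\<in>Jset n \<xi>. expect M (\<lambda>z. z j))"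
proof -
  interpret prob_space M by fact
  have ci: "\<And>j. j \<in> {1..n} \<Longrightarrow> integrable M (\<lambda>z. z j)" using coord_integrable[OF P S A] by blast
  have Yeq: "Yf n = (\<lambda>z. \<Sum>i=1..n. z i / (real n + 1 - real i))" by (auto simp: Yf_def fun_eq_iff)
  show YI: "integrable M (Yf n)" unfolding Yeq
    by (intro Bochner_Integration.integrable_sum integrable_divide ci) auto
  show "0 \<le> expect M (Yf n)" unfolding expect_def
    by (rule integral_nonneg_AE) (use A Y_nonneg in auto)
  have Jsub: "Jset n \<xi> \<subseteq> {1..n}" by (auto simp: Jset_def)
  have HI: "integrable M (\<lambda>z. \<Sum>j\<in>Jset n \<xi>. z j)"
    by (intro Bochner_Integration.integrable_sum ci) (use Jsub in auto)
  have RI: "integrable M (\<lambda>z. 1 / (real n * (1 - \<xi>)) + 1 - (\<Sum>j\<in>Jset n \<xi>. z j))"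
    by (intro Bochner_Integration.integrable_diff integrable_const HI)
  have "expect M (Yf n) \<le> integral\<^sup>L M (\<lambda>z. 1 / (real n * (1 - \<xi>)) + 1 - (\<Sum>j\<in>Jset n \<xi>. z j))"
    unfolding expect_def
    by (rule integral_mono_AE[OF YI RI]) (use A Y_bound[OF _ x n] in auto)
  also have "\<dots> = 1 / (real n * (1 - \<xi>)) + 1 - (\<Sum>j\<in>Jset n \<xi>. expect M (\<lambda>z. z j))"
    unfolding expect_def
    apply (subst Bochner_Integration.integral_diff[OF integrable_const HI])
    apply (subst Bochner_Integration.integral_sum)
    using ci Jsub apply blast
    apply (simp add: prob_space)
    done
  finally show "expect M (Yf n) \<le> 1 / (real n * (1 - \<xi>)) + 1 - (\<Sum>j\<in>Jset n \<xi>. expect M (\<lambda>z. z j))" .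
qed

lemma EY_tendsto:
  fixes w :: "real \<Rightarrow> real" and \<tau> :: "nat \<Rightarrow> (nat \<Rightarrow> real) measure"
  assumes w0: "\<forall>x\<in>{0..1}. 0 \<le> w x" and wi: "(w has_integral 1) {0..1}"
    and wc: "continuous_on {0..<1} w"
    and P: "\<forall>n\<ge>1. prob_space (\<tau> n)"
    and S: "\<forall>n\<ge>1. sets (\<tau> n) = sets (PiM {1..n} (\<lambda>_. borel))"
    and A: "\<forall>n\<ge>1. AE z in \<tau> n. z \<in> simplex1 n"
    and pc: "pre_chaotic w \<tau>"
  shows "(\<lambda>n. expect (\<tau> n) (Yf n)) \<longlonglongrightarrow> 0"
  unfolding tendsto_iff
proof (intro allI impI)
  fix e :: real assume e: "0 < e"
  define \<eta> where "\<eta> = e / 5"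
  have \<eta>: "0 < \<eta>" using e by (simp add: \<eta>_def)
  obtain \<xi> where x: "0 < \<xi>" "\<xi> < 1"
    and ev_r: "\<forall>\<^sub>F n in sequentially. 1 - 2 * \<eta> \<le> (\<Sum>j\<in>{j\<in>{1..n}. real j < real n * \<xi>}. w (real j / real n)) / real n"
    using riemann_lower[OF w0 wi wc \<eta>] by blast
  obtain C where C: "\<forall>\<epsilon>>0. \<exists>N. \<forall>n>N. \<forall>j k.
          1 \<le> j \<longrightarrow> 1 \<le> k \<longrightarrow> real j < real n * \<xi> \<longrightarrow> real k < real n * \<xi> \<longrightarrow>
          \<bar>real n * expect (\<tau> n) (\<lambda>z. z j) - w (real j / real n)\<bar> < \<epsilon> \<and>
          var (\<tau> n) (\<lambda>z. z j) \<le> C * \<epsilon> / real n \<and>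
          (j \<noteq> k \<longrightarrow> \<bar>covar (\<tau> n) (\<lambda>z. z j) (\<lambda>z. z k)\<bar> \<le> C * \<epsilon> / (real n)\<^sup>2)"
    using pc x unfolding pre_chaotic_def by blast
  then obtain N where N: "\<forall>n>N. \<forall>j. 1 \<le> j \<longrightarrow> real j < real n * \<xi> \<longrightarrow>
          \<bar>real n * expect (\<tau> n) (\<lambda>z. z j) - w (real j / real n)\<bar> < \<eta>"
    using \<eta> by blast
  have ev1: "\<forall>\<^sub>F n in sequentially. 1 / real n < \<eta> * (1 - \<xi>)"
    by (rule order_tendstoD(2)[OF lim_1_over_n]) (use \<eta> x in auto)
  have ev2: "\<forall>\<^sub>F n in sequentially. N < n" by (rule eventually_gt_at_top)
  have ev3: "\<forall>\<^sub>F n in sequentially. (1::nat) \<le> n" by (rule eventually_ge_at_top)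
  show "\<forall>\<^sub>F n in sequentially. dist (expect (\<tau> n) (Yf n)) 0 < e"
    using ev_r ev1 ev2 ev3
  proof eventually_elim
    case (elim n)
    then have R: "1 - 2 * \<eta> \<le> (\<Sum>j\<in>Jset n \<xi>. w (real j / real n)) / real n"
      and g: "1 / real n < \<eta> * (1 - \<xi>)" and nN: "N < n" and n: "0 < n"
      by (auto simp: Jset_def)
    have Pn: "prob_space (\<tau> n)" and Sn: "sets (\<tau> n) = sets (PiM {1..n} (\<lambda>_. borel))"
      and An: "AE z in \<tau> n. z \<in> simplex1 n" using P S A n by auto
    note EB = EY_bound[OF Pn Sn An x n]
    have lb: "(w (real j / real n) - \<eta>) / real n \<le> expect (\<tau> n) (\<lambda>z. z j)" if j: "j \<in> Jset n \<xi>" for j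
    proof -
      have "\<bar>real n * expect (\<tau> n) (\<lambda>z. z j) - w (real j / real n)\<bar> < \<eta>"
        using N nN j by (auto simp: Jset_def)
      then have "w (real j / real n) - \<eta> \<le> real n * expect (\<tau> n) (\<lambda>z. z j)" by linarith
      then show ?thesis using n by (simp add: divide_le_eq mult.commute)
    qed
    have "(\<Sum>j\<in>Jset n \<xi>. (w (real j / real n) - \<eta>) / real n) \<le> (\<Sum>j\<in>Jset n \<xi>. expect (\<tau> n) (\<lambda>z. z j))"
      by (rule sum_mono) (rule lb)
    moreover have "(\<Sum>j\<in>Jset n \<xi>. (w (real j / real n) - \<eta>) / real n)
        = (\<Sum>j\<in>Jset n \<xi>. w (real j / real n)) / real n - \<eta> * real (card (Jset n \<xi>)) / real n"
      by (simp add: sum_divide_distrib[symmetric] sum_subtractf diff_divide_distrib)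
    moreover have "\<eta> * real (card (Jset n \<xi>)) / real n \<le> \<eta>"
    proof -
      have "card (Jset n \<xi>) \<le> card {1..n}" by (rule card_mono) (auto simp: Jset_def)
      then have "real (card (Jset n \<xi>)) \<le> real n" by simp
      then show ?thesis using n \<eta> by (simp add: divide_le_eq mult_left_le)
    qed
    ultimately have HS: "1 - 3 * \<eta> \<le> (\<Sum>j\<in>Jset n \<xi>. expect (\<tau> n) (\<lambda>z. z j))" using R by linarith
    have c: "0 < 1 - \<xi>" using x by simp
    have "(1 / real n) / (1 - \<xi>) < \<eta>" using g pos_divide_less_eq[OF c] by blast
    then have "1 / (real n * (1 - \<xi>)) < \<eta>" by (simp only: divide_divide_eq_left)
    then have "expect (\<tau> n) (Yf n) < 4 * \<eta>" using EB(3) HS by linarith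
    then show ?case using EB(2) by (simp add: \<eta>_def dist_real_def)
  qed
qed

lemma Xeq:
  assumes "2 \<le> n"
  shows "xpt n a z n = real n * (1 - a / 2) * Yf n z + a"
proof -
  have "real n - 1 \<noteq> 0" using assms by simp
  then show ?thesis using assms by (simp add: xpt_def Tmap_def Yf_def)
qed

lemma X_facts:
  assumes P: "prob_space M" and S: "sets M = sets (PiM {1..n} (\<lambda>_. borel))"
    and A: "AE z in M. z \<in> simplex1 n" and n: "2 \<le> n" and a: "0 < a" "a < 2"
  shows "integrable M (\<lambda>z. xpt n a z n)"
    "AE z in M. 0 \<le> xpt n a z n"
    "expect M (\<lambda>z. xpt n a z n) / real n = (1 - a / 2) * expect M (Yf n) + a / real n"
proof -
  interpret prob_space M by fact
  have x: "0 < (1/2::real)" "(1/2::real) < 1" by auto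
  note EB = EY_bound[OF P S A x]
  have n0: "0 < n" using n by simp
  have YI: "integrable M (Yf n)" by (rule EB(1)[OF n0])
  have eq: "(\<lambda>z. xpt n a z n) = (\<lambda>z. real n * (1 - a / 2) * Yf n z + a)"
    using Xeq[OF n] by auto
  show "integrable M (\<lambda>z. xpt n a z n)" unfolding eq
    by (intro Bochner_Integration.integrable_add integrable_mult_right integrable_const YI)
  show "AE z in M. 0 \<le> xpt n a z n"
    using A
  proof eventually_elim
    case (elim z)
    have "0 \<le> Yf n z" by (rule Y_nonneg[OF elim])
    then show ?case unfolding Xeq[OF n] using a by simp
  qed
  have "expect M (\<lambda>z. xpt n a z n) = real n * (1 - a / 2) * expect M (Yf n) + a"
    unfolding eq expect_def
    by (simp add: Bochner_Integration.integral_add[OF integrable_mult_right[OF YI] integrable_const] prob_space)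
  then show "expect M (\<lambda>z. xpt n a z n) / real n = (1 - a / 2) * expect M (Yf n) + a / real n"
    using n0 by (simp add: field_simps)
qed

theorem lemma3p7:
  fixes \<alpha> :: real and as :: "nat \<Rightarrow> real" and w :: "real \<Rightarrow> real"
    and \<tau> :: "nat \<Rightarrow> (nat \<Rightarrow> real) measure"
  assumes "0 < \<alpha>" "\<alpha> < 2"
    and "\<forall>n. 0 < as n \<and> as n < 2"
    and "as \<longlonglongrightarrow> \<alpha>"
    and "\<forall>x\<in>{0..1}. 0 \<le> w x"
    and "(w has_integral 1) {0..1}"
    and "continuous_on {0..<1} w"
    and "\<forall>n\<ge>1. prob_space (\<tau> n)"
    and "\<forall>n\<ge>1. sets (\<tau> n) = sets (PiM {1..n} (\<lambda>_. borel))"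
    and "\<forall>n\<ge>1. AE z in \<tau> n. z \<in> simplex1 n"
    and "pre_chaotic w \<tau>"
  shows "((\<lambda>n. expect (\<tau> n) (\<lambda>z. xpt n (as n) z n) / real n) \<longlonglongrightarrow> 0)
    \<and> (\<forall>\<delta>>0. (\<lambda>n. measure (\<tau> n)
            {z \<in> space (\<tau> n). W1 (mu_emp n (as n) z) (rho n (as n) z) > ereal \<delta>}) \<longlonglongrightarrow> 0)"
proof -
  note asm = assms
  have EY: "(\<lambda>n. expect (\<tau> n) (Yf n)) \<longlonglongrightarrow> 0"
    by (rule EY_tendsto[OF assms(5-11)])
  have ev2: "\<forall>\<^sub>F n in sequentially. (2::nat) \<le> n" by (rule eventually_ge_at_top)
  have lim1: "(\<lambda>n. (1 - as n / 2) * expect (\<tau> n) (Yf n) + as n * (1 / real n)) \<longlonglongrightarrow> (1 - \<alpha> / 2) * 0 + \<alpha> * 0"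
    by (intro tendsto_intros EY lim_1_over_n assms(4)) simp_all
  have L1: "(\<lambda>n. expect (\<tau> n) (\<lambda>z. xpt n (as n) z n) / real n) \<longlonglongrightarrow> 0"
  proof (rule Lim_transform_eventually)
    show "(\<lambda>n. (1 - as n / 2) * expect (\<tau> n) (Yf n) + as n * (1 / real n)) \<longlonglongrightarrow> 0"
      using lim1 by simp
    show "\<forall>\<^sub>F n in sequentially. (1 - as n / 2) * expect (\<tau> n) (Yf n) + as n * (1 / real n)
        = expect (\<tau> n) (\<lambda>z. xpt n (as n) z n) / real n"
      using ev2
    proof eventually_elim
      case (elim n)
      then have "1 \<le> n" by simp
      then show ?case using X_facts(3)[of "\<tau> n" n "as n"] asm(3,8,9,10) elim by simp
    qed
  qed
  have L2: "(\<lambda>n. measure (\<tau> n)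
            {z \<in> space (\<tau> n). W1 (mu_emp n (as n) z) (rho n (as n) z) > ereal \<delta>}) \<longlonglongrightarrow> 0"
    if d: "\<delta> > 0" for \<delta>
  proof (rule tendsto_sandwich)
    show "\<forall>\<^sub>F n in sequentially. 0 \<le> measure (\<tau> n)
            {z \<in> space (\<tau> n). W1 (mu_emp n (as n) z) (rho n (as n) z) > ereal \<delta>}"
      by simp
    show "(\<lambda>n. 0::real) \<longlonglongrightarrow> 0" by simp
    show "(\<lambda>n. expect (\<tau> n) (\<lambda>z. xpt n (as n) z n) / real n / \<delta>) \<longlonglongrightarrow> 0"
      using tendsto_divide[OF L1 tendsto_const[of \<delta>]] d by simp
    show "\<forall>\<^sub>F n in sequentially. measure (\<tau> n)
            {z \<in> space (\<tau> n). W1 (mu_emp n (as n) z) (rho n (as n) z) > ereal \<delta>}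
          \<le> expect (\<tau> n) (\<lambda>z. xpt n (as n) z n) / real n / \<delta>"
      using ev2
    proof eventually_elim
      case (elim n)
      then have n1: "1 \<le> n" and n0: "0 < n" by auto
      have Pn: "prob_space (\<tau> n)" and Sn: "sets (\<tau> n) = sets (PiM {1..n} (\<lambda>_. borel))"
        and An: "AE z in \<tau> n. z \<in> simplex1 n" using asm(8,9,10) n1 by auto
      have a: "0 < as n" "as n < 2" using asm(3) by auto
      interpret prob_space "\<tau> n" by (rule Pn)
      note XF = X_facts[OF Pn Sn An elim a]
      define X where "X = (\<lambda>z. xpt n (as n) z n)"
      have XI: "integrable (\<tau> n) X" using XF(1) by (simp add: X_def)
      have XM[measurable]: "X \<in> borel_measurable (\<tau> n)" using XI by (rule borel_measurable_integrable)
      have c: "0 < real n * \<delta>" using n0 d by simp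
      define B where "B = {z \<in> space (\<tau> n). real n * \<delta> \<le> X z}"
      have Bs: "B \<in> sets (\<tau> n)" unfolding B_def by measurable
      have "measure (\<tau> n) {z \<in> space (\<tau> n). W1 (mu_emp n (as n) z) (rho n (as n) z) > ereal \<delta>}
          \<le> measure (\<tau> n) B"
      proof (rule finite_measure_mono_AE[OF _ Bs])
        show "AE z\<in>{z \<in> space (\<tau> n). W1 (mu_emp n (as n) z) (rho n (as n) z) > ereal \<delta>} in \<tau> n. z \<in> B"
          using XF(2)
        proof eventually_elim
          case (elim z)
          show ?case
          proof
            assume z: "z \<in> {z \<in> space (\<tau> n). W1 (mu_emp n (as n) z) (rho n (as n) z) > ereal \<delta>}"
            then have "ereal \<delta> < ereal (\<bar>xpt n (as n) z n\<bar> / real n)"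
              using W1_bound[OF n0, of "as n" z] order.strict_trans2 by blast
            then have "\<delta> < X z / real n" using elim by (simp add: X_def)
            then have "real n * \<delta> \<le> X z" using n0 by (simp add: field_simps)
            then show "z \<in> B" using z by (simp add: B_def)
          qed
        qed
      qed
      also have "measure (\<tau> n) B \<le> integral\<^sup>L (\<tau> n) X / (real n * \<delta>)"
        unfolding B_def
        by (rule integral_Markov_inequality_measure[OF XI _ _ c, of "space (\<tau> n)"])
           (use XF(2) in \<open>auto simp: X_def\<close>)
      also have "\<dots> = expect (\<tau> n) (\<lambda>z. xpt n (as n) z n) / real n / \<delta>"
        by (simp add: X_def expect_def field_simps)
      finally show ?case .
    qed
  qed
  show ?thesis using L1 L2 by blast
qed

end
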